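(* Let $\lambda \geq 0$ and $0\leq\beta<1$. Let $f(z)=z+\sum_{k=2}^{\infty}a_kz^k$ belong to $\Theta_{\Sigma}(1,\lambda,0,0;\beta)$ (the case $\tau=1$, $\gamma=\delta=0$). Then $$|a_2| \leq \min\left\{\frac{2(1-\beta)}{1+\lambda},\ \sqrt{\frac{2(1-\beta)}{1+2\lambda}}\right\}\quad\text{and}\quad |a_3| \leq \frac{2(1-\beta)}{1+2\lambda}.$$
   Context: Let $\mathbb{U}=\{z\in\mathbb{C}:|z|<1\}$. $\Sigma$ denotes the class of bi-univalent functions: functions $f(z)=z+\sum_{k=2}^\infty a_kz^k$ analytic and univalent in $\mathbb{U}$ whose inverse $f^{-1}$ extends to a univalent function $g$ on $\mathbb{U}$; this $g$ has the expansion $g(w)=w-a_2w^2+(2a_2^2-a_3)w^3-\cdots$. For $\delta\in\mathbb{N}_0$ and $h(z)=z+\sum_{k\ge2}c_kz^k$ analytic in $\mathbb{U}$, the Ruscheweyh derivative is $\mathcal{R}^\delta h(z)=z+\sum_{k=2}^{\infty}\frac{\Gamma(\delta+k)}{\Gamma(k)\Gamma(\delta+1)}c_kz^k$ (for $\delta=0$ it is the identity). For such $h$ and parameters $\lambda,\gamma,\tau\neq0,\delta$, put $$J_h(z)=1+\frac{1}{\tau}\Big[(1-\lambda)(1-\gamma)\frac{\mathcal{R}^\delta h(z)}{z}+(\lambda(\gamma+1)+\gamma)(\mathcal{R}^\delta h)'(z)+\lambda\gamma\big(z(\mathcal{R}^\delta h)''(z)-2\big)-1\Big].$$ For $0\le\beta<1$,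 $\Theta_{\Sigma}(\tau,\lambda,\gamma,\delta;\beta)$ is the set of $f\in\Sigma$ such that $\operatorname{Re}J_f(z)>\beta$ for all $z\in\mathbb{U}$ and $\operatorname{Re}J_g(w)>\beta$ for all $w\in\mathbb{U}$, where $g$ is the extension of $f^{-1}$ to $\mathbb{U}$. *)

theory Defs
  imports "HOL-Analysis.Analysis"
begin

definition coeff0 :: "(complex \<Rightarrow> complex) \<Rightarrow> nat \<Rightarrow> complex" where
  "coeff0 h k = (deriv ^^ k) h 0 / of_nat (fact k)"

definition normalized_univalent :: "(complex \<Rightarrow> complex) \<Rightarrow> bool" where
  "normalized_univalent h \<longleftrightarrow>
     h analytic_on ball 0 1 \<and> h 0 = 0 \<and> deriv h 0 = 1 \<and> inj_on h (ball 0 1)"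

definition inverse_extension :: "(complex \<Rightarrow> complex) \<Rightarrow> (complex \<Rightarrow> complex) \<Rightarrow> bool" where
  "inverse_extension f g \<longleftrightarrow>
     g analytic_on ball 0 1 \<and> inj_on g (ball 0 1) \<and>
     (\<forall>z\<in>ball 0 1. f z \<in> ball 0 1 \<longrightarrow> g (f z) = z)"

definition bi_univalent :: "(complex \<Rightarrow> complex) \<Rightarrow> bool" where
  "bi_univalent f \<longleftrightarrow> normalized_univalent f \<and> (\<exists>g. inverse_extension f g)"

definition ruscheweyh :: "nat \<Rightarrow> (complex \<Rightarrow> complex) \<Rightarrow> complex \<Rightarrow> complex" where
  "ruscheweyh \<delta> h z = z + (\<Sum>k. if 2 \<le> k then
      complex_of_real (Gamma (real (\<delta> + k)) / (Gamma (real k) * Gamma (real \<delta> + 1)))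
        * coeff0 h k * z ^ k else 0)"

text \<open>The quotient p(z)/z with its removable singularity at 0 filled in (p(0)=0).\<close>
definition quot_z :: "(complex \<Rightarrow> complex) \<Rightarrow> complex \<Rightarrow> complex" where
  "quot_z p z = (if z = 0 then deriv p 0 else p z / z)"

definition J_fun :: "complex \<Rightarrow> real \<Rightarrow> real \<Rightarrow> nat \<Rightarrow> (complex \<Rightarrow> complex) \<Rightarrow> complex \<Rightarrow> complex" where
  "J_fun \<tau> lam \<gamma> \<delta> h z =
     1 + (1 / \<tau>) * (of_real ((1 - lam) * (1 - \<gamma>)) * quot_z (ruscheweyh \<delta> h) z
        + of_real (lam * (\<gamma> + 1) + \<gamma>) * deriv (ruscheweyh \<delta> h) z
        + of_real (lam * \<gamma>) * (z * deriv (deriv (ruscheweyh \<delta> h)) z - 2) - 1)"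

definition Theta :: "complex \<Rightarrow> real \<Rightarrow> real \<Rightarrow> nat \<Rightarrow> real \<Rightarrow> (complex \<Rightarrow> complex) set" where
  "Theta \<tau> lam \<gamma> \<delta> \<beta> = {f. normalized_univalent f \<and>
     (\<exists>g. inverse_extension f g \<and>
        (\<forall>z\<in>ball 0 1. Re (J_fun \<tau> lam \<gamma> \<delta> f z) > \<beta>) \<and>
        (\<forall>w\<in>ball 0 1. Re (J_fun \<tau> lam \<gamma> \<delta> g w) > \<beta>))}"

end

theory Submission
  imports Defs "HOL-Complex_Analysis.Complex_Analysis"
begin


lemma fps_exp_unique:
  fixes f :: "complex \<Rightarrow> complex"
  assumes "f has_fps_expansion F" "f has_fps_expansion G"
  shows "F = G"
  using fps_nth_fps_expansion[OF assms(1)] fps_nth_fps_expansion[OF assms(2)]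
  by (intro fps_ext) simp

lemma hol_fps:
  fixes f :: "complex \<Rightarrow> complex"
  assumes "f holomorphic_on ball 0 1"
  shows "f has_fps_expansion fps_expansion f 0"
  using assms by (intro has_fps_expansion_fps_expansion) auto

lemma ev_ball: "eventually (\<lambda>z. z \<in> ball (0::complex) 1) (nhds 0)"
  by (intro eventually_nhds_in_open) auto

lemma norm_lt_re:
  fixes w :: complex assumes "Re w > 0"
  shows "cmod (w - 1) < cmod (w + 1)"
proof -
  have "(cmod (w - 1))^2 < (cmod (w+1))^2"
  proof -
    have a: "(cmod (w - 1))^2 = (Re w - 1)^2 + (Im w)^2" by (simp add: cmod_power2)
    have b: "(cmod (w + 1))^2 = (Re w + 1)^2 + (Im w)^2" by (simp add: cmod_power2)
    show ?thesis unfolding a b using assms by (simp add: power2_eq_square algebra_simps)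
  qed
  then show ?thesis by (simp add: power_less_imp_less_base)
qed

lemma omega_basic:
  fixes p :: "complex \<Rightarrow> complex"
  assumes hol: "p holomorphic_on ball 0 1" and p0: "p 0 = 1"
    and re: "\<And>z. z \<in> ball 0 1 \<Longrightarrow> Re (p z) > 0"
    and \<omega>_def: "\<omega> = (\<lambda>z. (p z - 1) / (p z + 1))"
  shows "\<omega> holomorphic_on ball 0 1" "\<omega> 0 = 0" "\<And>z. norm z < 1 \<Longrightarrow> norm (\<omega> z) < 1"
    "fps_expansion \<omega> 0 * (fps_expansion p 0 + 1) = fps_expansion p 0 - 1"
proof -
  have nz: "p z + 1 \<noteq> 0" if "z \<in> ball 0 1" for z
  proof
    assume "p z + 1 = 0"
    then have "p z = -1" by (simp add: add_eq_0_iff2)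
    with re[OF that] show False by simp
  qed
  show h: "\<omega> holomorphic_on ball 0 1"
    unfolding \<omega>_def using nz by (intro holomorphic_intros hol) auto
  show "\<omega> 0 = 0" by (simp add: \<omega>_def p0)
  show "norm (\<omega> z) < 1" if "norm z < 1" for z
  proof -
    have "z \<in> ball 0 1" using that by simp
    from norm_lt_re[OF re[OF this]] nz[OF this] show ?thesis
      by (simp add: \<omega>_def norm_divide divide_less_eq)
  qed
  have "(\<lambda>z. \<omega> z * (p z + 1)) has_fps_expansion fps_expansion \<omega> 0 * (fps_expansion p 0 + 1)"
    by (intro fps_expansion_intros hol_fps h hol)
  moreover have "(\<lambda>z. \<omega> z * (p z + 1)) has_fps_expansion fps_expansion p 0 - 1
     \<longleftrightarrow> (\<lambda>z. p z - 1) has_fps_expansion fps_expansion p 0 - 1"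
    by (rule has_fps_expansion_cong[OF eventually_mono[OF ev_ball]]) (auto simp: \<omega>_def nz)
  moreover have "(\<lambda>z. p z - 1) has_fps_expansion fps_expansion p 0 - 1"
    by (intro fps_expansion_intros hol_fps hol)
  ultimately show "fps_expansion \<omega> 0 * (fps_expansion p 0 + 1) = fps_expansion p 0 - 1"
    using fps_exp_unique by blast
qed

lemma fps0: fixes f :: "complex \<Rightarrow> complex"
  assumes "f holomorphic_on ball 0 1" shows "fps_nth (fps_expansion f 0) 0 = f 0"
  using fps_nth_fps_expansion[OF hol_fps[OF assms], of 0] by simp

lemma fps1: fixes f :: "complex \<Rightarrow> complex"
  assumes "f holomorphic_on ball 0 1" shows "fps_nth (fps_expansion f 0) 1 = deriv f 0"
  using fps_nth_fps_expansion[OF hol_fps[OF assms], of 1] by simp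

lemma cara1:
  fixes p :: "complex \<Rightarrow> complex"
  assumes hol: "p holomorphic_on ball 0 1" and p0: "p 0 = 1"
    and re: "\<And>z. z \<in> ball 0 1 \<Longrightarrow> Re (p z) > 0"
  shows "cmod (fps_nth (fps_expansion p 0) 1) \<le> 2"
proof -
  define \<omega> where "\<omega> = (\<lambda>z. (p z - 1) / (p z + 1))"
  note ob = omega_basic[OF hol p0 re \<omega>_def]
  define W where "W = fps_expansion \<omega> 0"
  define P where "P = fps_expansion p 0"
  have "norm (deriv \<omega> 0) \<le> 1"
    using Schwarz_Lemma(2)[OF ob(1) ob(2) ob(3), of 0] by simp
  moreover have "(fps_nth W 1) = deriv \<omega> 0" unfolding W_def by (rule fps1[OF ob(1)])
  moreover have "(fps_nth W 0) = 0" unfolding W_def using fps0[OF ob(1)] ob(2) by simp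
  moreover have "(fps_nth P 0) = 1" unfolding P_def using fps0[OF hol] p0 by simp
  moreover have "fps_nth (W * (P + 1)) 1 = (fps_nth (P - 1) 1)" using ob(4) unfolding W_def P_def by simp
  ultimately have "cmod (deriv \<omega> 0) \<le> 1" "deriv \<omega> 0 * 2 = fps_nth P 1"
    by (simp_all add: fps_mult_nth_1)
  moreover from this(2) have "cmod (fps_nth P 1) = cmod (deriv \<omega> 0) * 2"
    by (metis norm_mult norm_numeral)
  ultimately show ?thesis unfolding P_def[symmetric] by linarith
qed

lemma cara2:
  fixes p :: "complex \<Rightarrow> complex"
  assumes hol: "p holomorphic_on ball 0 1" and p0: "p 0 = 1"
    and re: "\<And>z. z \<in> ball 0 1 \<Longrightarrow> Re (p z) > 0"
  shows "cmod (fps_nth (fps_expansion p 0) 2) \<le> 2"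
proof -
  define P where "P = fps_expansion p 0"
  define q where "q = (\<lambda>z. (1/2) * (p z + p (-z)))"
  have holm: "(\<lambda>z. p (-z)) holomorphic_on ball 0 1"
  proof -
    have "uminus ` ball (0::complex) 1 \<subseteq> ball 0 1" by auto
    then have "p holomorphic_on uminus ` ball 0 1" using hol holomorphic_on_subset by blast
    moreover have "(\<lambda>z. -z) holomorphic_on ball (0::complex) 1" by (intro holomorphic_intros)
    ultimately show ?thesis using holomorphic_on_compose[of uminus "ball 0 1" p] by (simp add: o_def)
  qed
  have holq: "q holomorphic_on ball 0 1" unfolding q_def
    by (intro holomorphic_intros hol holm)
  have q0: "q 0 = 1" by (simp add: q_def p0)
  have req: "Re (q z) > 0" if "z \<in> ball 0 1" for z
    using re[OF that] re[of "-z"] that by (simp add: q_def)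
  have "(\<lambda>z. p (-z)) has_fps_expansion fps_compose P (-fps_X)"
    using has_fps_expansion_compose[OF hol_fps[OF hol] has_fps_expansion_minus[OF has_fps_expansion_fps_X]]
    by (simp add: o_def P_def)
  then have "q has_fps_expansion fps_const (1/2) * (P + fps_compose P (-fps_X))"
    unfolding q_def P_def by (intro fps_expansion_intros hol_fps hol)
  then have Qe: "fps_expansion q 0 = fps_const (1/2) * (P + fps_compose P (-fps_X))"
    using fps_exp_unique hol_fps[OF holq] by blast
  define Q where "Q = fps_expansion q 0"
  have P0: "(fps_nth P 0) = 1" unfolding P_def using fps0[OF hol] p0 by simp
  have Q0: "(fps_nth Q 0) = 1" "(fps_nth Q 1) = 0" "(fps_nth Q 2) = (fps_nth P 2)"
    unfolding Q_def Qe by (simp_all add: fps_compose_uminus' P0)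
  define \<omega> where "\<omega> = (\<lambda>z. (q z - 1) / (q z + 1))"
  note ob = omega_basic[OF holq q0 req \<omega>_def]
  define W where "W = fps_expansion \<omega> 0"
  have W0: "(fps_nth W 0) = 0" unfolding W_def using fps0[OF ob(1)] ob(2) by simp
  have eq: "W * (Q + 1) = Q - 1" using ob(4) unfolding W_def Q_def by simp
  have "fps_nth (W * (Q + 1)) 1 = (fps_nth (Q - 1) 1)" using eq by simp
  then have W1: "(fps_nth W 1) = 0" using W0 Q0 by (simp add: fps_mult_nth_1)
  have "fps_nth (W * (Q + 1)) 2 = (fps_nth (Q - 1) 2)" using eq by simp
  then have W2: "2 * (fps_nth W 2) = (fps_nth Q 2)" using W0 W1 Q0
    by (simp add: fps_mult_nth numeral_2_eq_2 mult.commute)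
  obtain h where holh: "h holomorphic_on ball 0 1" and hz: "\<And>z. norm z < 1 \<Longrightarrow> \<omega> z = z * h z"
    and dh: "deriv \<omega> 0 = h 0"
    using Schwarz3[OF ob(1) ob(2)] by blast
  define H where "H = fps_expansion h 0"
  have "(\<lambda>z. z * h z) has_fps_expansion fps_X * H"
    unfolding H_def by (intro fps_expansion_intros hol_fps holh)
  moreover have "(\<lambda>z. z * h z) has_fps_expansion fps_X * H \<longleftrightarrow> \<omega> has_fps_expansion fps_X * H"
    by (rule has_fps_expansion_cong[OF eventually_mono[OF ev_ball]]) (auto simp: hz)
  ultimately have "fps_X * H = W" using fps_exp_unique hol_fps[OF ob(1)] unfolding W_def by blast
  then have WH: "(fps_nth W 2) = (fps_nth H 1)" "(fps_nth W 1) = (fps_nth H 0)"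
    by (metis fps_X_mult_nth diff_Suc_1 numeral_2_eq_2 zero_neq_numeral nat.simps(3) One_nat_def)+
  have h0: "h 0 = 0" using fps0[OF holh] WH W1 unfolding H_def by simp
  have hle: "norm (h z) \<le> 1" if "norm z < 1" for z
  proof (cases "z = 0")
    case True then show ?thesis by (simp add: h0)
  next
    case False
    have "norm (\<omega> z) \<le> norm z" using Schwarz_Lemma(1)[OF ob(1) ob(2) ob(3) that] .
    then show ?thesis using hz[OF that] False by (simp add: norm_mult)
  qed
  have tle: "t * norm ((fps_nth H 1)) \<le> 1" if t: "0 < t" "t < 1" for t :: real
  proof -
    define k where "k = (\<lambda>z. complex_of_real t * h z)"
    have holk: "k holomorphic_on ball 0 1" unfolding k_def by (intro holomorphic_intros holh)
    have k0: "k 0 = 0" by (simp add: k_def h0)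
    have kl: "norm (k z) < 1" if "norm z < 1" for z
    proof -
      have "norm (k z) = t * norm (h z)" using t by (simp add: k_def norm_mult)
      also have "\<dots> \<le> t * 1" using hle[OF that] t by (intro mult_left_mono) auto
      finally show ?thesis using t by simp
    qed
    have "norm (deriv k 0) \<le> 1" using Schwarz_Lemma(2)[OF holk k0 kl, of 0] by simp
    moreover have "h field_differentiable at 0"
      using holh by (intro holomorphic_on_imp_differentiable_at[of _ "ball 0 1"]) auto
    then have "deriv k 0 = t * deriv h 0" unfolding k_def by (rule deriv_cmult)
    moreover have "deriv h 0 = (fps_nth H 1)" unfolding H_def by (rule fps1[OF holh, symmetric])
    ultimately show ?thesis using t by (simp add: norm_mult)
  qed
  have "norm ((fps_nth H 1)) \<le> 1"
  proof (rule ccontr)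
    assume "\<not> ?thesis"
    then have x: "norm ((fps_nth H 1)) > 1" by simp
    define x where "x = norm (fps_nth H 1)"
    have x1: "x > 1" using x by (simp add: x_def)
    define t where "t = (1 + 1/x)/2"
    have a: "0 < 1/x" "1/x < 1" using x1 by auto
    have "0 < t" unfolding t_def using x1 by (smt (verit) divide_pos_pos)
    moreover have "t < 1" unfolding t_def using x1 by (smt (verit) divide_less_eq_1 divide_pos_pos)
    ultimately have "t * x \<le> 1" using tle[of t] by (simp add: x_def)
    moreover have "t * x = (x + 1) / 2" using x1 by (simp add: t_def field_simps)
    ultimately show False using x1 by simp
  qed
  then show ?thesis using W2 WH Q0 unfolding P_def[symmetric]
    by (metis norm_mult norm_numeral mult_le_cancel_left_pos zero_less_numeral mult.right_neutral order.trans order_refl)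
qed




lemma coeff0_fps: "coeff0 h k = fps_nth (fps_expansion h 0) k"
  by (simp add: coeff0_def fps_expansion_def)

lemma rusch0:
  fixes h :: "complex \<Rightarrow> complex"
  assumes hol: "h holomorphic_on ball 0 1" and h0: "h 0 = 0" and d0: "deriv h 0 = 1"
    and z: "z \<in> ball 0 1"
  shows "ruscheweyh 0 h z = h z"
proof -
  define a where "a = (\<lambda>n. coeff0 h n * z ^ n)"
  have "a sums h z"
    using holomorphic_power_series[OF hol z] by (simp add: a_def coeff0_def)
  then have "(\<lambda>i. a (i + 2)) sums (h z - (\<Sum>i<2. a i))"
    using sums_iff_shift[of a 2 "h z - (\<Sum>i<2. a i)"] by simp
  moreover have "(\<Sum>i<2. a i) = z"
    by (simp add: a_def coeff0_def numeral_2_eq_2 h0 d0)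
  ultimately have s1: "(\<lambda>i. a (i + 2)) sums (h z - z)" by simp
  define b where "b = (\<lambda>k. if 2 \<le> k then a k else 0)"
  have "(\<lambda>i. b (i + 2)) = (\<lambda>i. a (i + 2))" by (simp add: b_def)
  with s1 have "b sums (h z - z + (\<Sum>i<2. b i))"
    using sums_iff_shift[of b 2 "h z - z"] by simp
  moreover have "(\<Sum>i<2. b i) = 0" by (simp add: b_def numeral_2_eq_2)
  ultimately have sb: "b sums (h z - z)" by simp
  have eq: "(\<lambda>k. if 2 \<le> k then
      complex_of_real (Gamma (real (0 + k)) / (Gamma (real k) * Gamma (real 0 + 1)))
        * coeff0 h k * z ^ k else 0) = b"
  proof
    fix k :: nat
    show "(if 2 \<le> k then
      complex_of_real (Gamma (real (0 + k)) / (Gamma (real k) * Gamma (real 0 + 1)))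
        * coeff0 h k * z ^ k else 0) = b k"
    proof (cases "2 \<le> k")
      case True
      then have "Gamma (real k) > 0" by (intro Gamma_real_pos) simp
      then have "Gamma (real k) \<noteq> 0" by simp
      then show ?thesis using True by (simp add: b_def a_def)
    qed (simp add: b_def)
  qed
  show ?thesis unfolding ruscheweyh_def eq using sb by (simp add: sums_iff)
qed

lemma J_eq:
  fixes h :: "complex \<Rightarrow> complex"
  assumes hol: "h holomorphic_on ball 0 1" and h0: "h 0 = 0" and d0: "deriv h 0 = 1"
    and z: "z \<in> ball 0 1"
  shows "J_fun 1 lam 0 0 h z = of_real (1 - lam) * (if z = 0 then 1 else h z / z) + of_real lam * deriv h z"
proof -
  have ev: "eventually (\<lambda>w. ruscheweyh 0 h w = h w) (nhds w)" if "w \<in> ball 0 1" for w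
    using eventually_nhds_in_open[OF open_ball that] by (rule eventually_mono) (simp add: rusch0[OF hol h0 d0])
  have dR: "deriv (ruscheweyh 0 h) w = deriv h w" if "w \<in> ball 0 1" for w
    using deriv_cong_ev[OF ev[OF that] refl] .
  have "quot_z (ruscheweyh 0 h) z = (if z = 0 then 1 else h z / z)"
    using dR[of 0] d0 rusch0[OF hol h0 d0 z] by (simp add: quot_z_def)
  then show ?thesis unfolding J_fun_def using dR[OF z] by simp
qed




lemma side:
  fixes h :: "complex \<Rightarrow> complex" and lam \<beta> :: real
  assumes hol: "h holomorphic_on ball 0 1" and h0: "h 0 = 0" and d0: "deriv h 0 = 1"
    and b1: "\<beta> < 1"
    and re: "\<forall>z\<in>ball 0 1. Re (J_fun 1 lam 0 0 h z) > \<beta>"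
  shows "\<exists>p1 p2. of_real (1 + lam) * fps_nth (fps_expansion h 0) 2 = of_real (1 - \<beta>) * p1
     \<and> of_real (1 + 2 * lam) * fps_nth (fps_expansion h 0) 3 = of_real (1 - \<beta>) * p2
     \<and> cmod p1 \<le> 2 \<and> cmod p2 \<le> 2"
proof -
  define H where "H = fps_expansion h 0"
  define qt where "qt = (\<lambda>z. if z = 0 then 1 else h z / z)"
  define p where "p = (\<lambda>z. of_real (1 / (1 - \<beta>)) *
      ((of_real (1 - lam) * qt z + of_real lam * deriv h z) - of_real \<beta>))"
  have qt_eq: "qt = (\<lambda>z. if z = 0 then deriv h 0 else (h z - h 0) / (z - 0))"
    unfolding qt_def using h0 d0 by (intro ext) simp
  have holqt: "qt holomorphic_on ball 0 1"
    unfolding qt_eq by (rule pole_lemma_open[OF hol]) simp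
  have holp: "p holomorphic_on ball 0 1"
    unfolding p_def by (intro holomorphic_intros holqt holomorphic_deriv hol) auto
  have p0: "p 0 = 1" using b1 by (simp add: p_def qt_def d0 field_simps)
  have rep: "Re (p z) > 0" if z: "z \<in> ball 0 1" for z
  proof -
    have "J_fun 1 lam 0 0 h z = of_real (1 - lam) * qt z + of_real lam * deriv h z"
      using J_eq[OF hol h0 d0 z] by (simp add: qt_def)
    moreover have "Re (J_fun 1 lam 0 0 h z) > \<beta>" using re z by blast
    ultimately have "Re (of_real (1 - lam) * qt z + of_real lam * deriv h z) > \<beta>" by simp
    then have "Re (of_real (1 - lam) * qt z + of_real lam * deriv h z) - \<beta> > 0" by simp
    then have "(Re (of_real (1 - lam) * qt z + of_real lam * deriv h z) - \<beta>) / (1 - \<beta>) > 0"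
      using b1 by simp
    then show ?thesis by (simp add: p_def)
  qed
  have H0: "fps_nth H 0 = 0" unfolding H_def using fps0[OF hol] h0 by simp
  have H1: "fps_nth H 1 = 1" unfolding H_def using fps1[OF hol] d0 by simp
  have Hnz: "H \<noteq> 0" using H1 by auto
  have sub: "1 \<le> subdegree H" by (rule subdegree_geI[OF Hnz]) (use H0 in auto)
  have "(\<lambda>x. if x = 0 then fps_nth H 1 else h x / x ^ 1) has_fps_expansion fps_shift 1 H"
    by (rule has_fps_expansion_shift[OF hol_fps[OF hol, folded H_def] sub refl])
  moreover have "qt = (\<lambda>x. if x = 0 then fps_nth H 1 else h x / x ^ 1)"
  proof
    fix x show "qt x = (if x = 0 then fps_nth H 1 else h x / x ^ 1)"
      using H1 by (cases "x = 0") (simp_all add: qt_def)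
  qed
  ultimately have eqt: "qt has_fps_expansion fps_shift 1 H" by simp
  have "p has_fps_expansion fps_const (of_real (1 / (1 - \<beta>))) *
     ((fps_const (of_real (1 - lam)) * fps_shift 1 H + fps_const (of_real lam) * fps_deriv H) - fps_const (of_real \<beta>))"
    unfolding p_def H_def
    by (intro fps_expansion_intros eqt[unfolded H_def] hol_fps hol)
  then have Pe: "fps_expansion p 0 = fps_const (of_real (1 / (1 - \<beta>))) *
     ((fps_const (of_real (1 - lam)) * fps_shift 1 H + fps_const (of_real lam) * fps_deriv H) - fps_const (of_real \<beta>))"
    using fps_exp_unique hol_fps[OF holp] by blast
  define p1 where "p1 = fps_nth (fps_expansion p 0) 1"
  define p2 where "p2 = fps_nth (fps_expansion p 0) 2"
  have c1: "cmod p1 \<le> 2" unfolding p1_def by (rule cara1[OF holp p0 rep])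
  have c2: "cmod p2 \<le> 2" unfolding p2_def by (rule cara2[OF holp p0 rep])
  have nb: "complex_of_real (1 - \<beta>) \<noteq> 0" using b1 by simp
  have nb': "1 - complex_of_real \<beta> \<noteq> 0" using b1
    by (metis nb of_real_1 of_real_diff)
  have k: "of_real (1 - \<beta>) * of_real (1 / (1 - \<beta>)) = (1::complex)"
    using b1 by (simp flip: of_real_mult)
  define c where "c = complex_of_real (1 / (1 - \<beta>))"
  have p1e: "p1 = c * (of_real (1 + lam) * fps_nth H 2)"
    unfolding p1_def Pe c_def[symmetric] by (simp add: algebra_simps numeral_2_eq_2)
  have p2e: "p2 = c * (of_real (1 + 2 * lam) * fps_nth H 3)"
    unfolding p2_def Pe c_def[symmetric] by (simp add: algebra_simps numeral_3_eq_3 numeral_2_eq_2)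
  have "of_real (1 - \<beta>) * p1 = (of_real (1 - \<beta>) * of_real (1 / (1 - \<beta>))) * (of_real (1 + lam) * fps_nth H 2)"
    unfolding p1e c_def by (simp only: mult.assoc)
  then have e1: "of_real (1 + lam) * fps_nth H 2 = of_real (1 - \<beta>) * p1" unfolding k by simp
  have "of_real (1 - \<beta>) * p2 = (of_real (1 - \<beta>) * of_real (1 / (1 - \<beta>))) * (of_real (1 + 2 * lam) * fps_nth H 3)"
    unfolding p2e c_def by (simp only: mult.assoc)
  then have e2: "of_real (1 + 2 * lam) * fps_nth H 3 = of_real (1 - \<beta>) * p2" unfolding k by simp
  show ?thesis using e1 e2 c1 c2 unfolding H_def by blast
qed




lemma inv_coeffs:
  fixes F G :: "complex fps"
  assumes "fps_compose G F = fps_X" "fps_nth F 0 = 0" "fps_nth F 1 = 1" "fps_nth G 0 = 0"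
  shows "fps_nth G 1 = 1" "fps_nth G 2 = - fps_nth F 2"
    "fps_nth G 3 = 2 * (fps_nth F 2)^2 - fps_nth F 3"
proof -
  have F2: "fps_nth (F^2) 0 = 0" "fps_nth (F^2) 1 = 0" "fps_nth (F^2) 2 = 1" "fps_nth (F^2) 3 = 2 * fps_nth F 2"
    using assms(2,3) by (simp_all add: power2_eq_square fps_mult_nth numeral_3_eq_3 numeral_2_eq_2)
  have F3: "fps_nth (F^3) 3 = 1"
  proof -
    have "F^3 = F * F^2" by (simp add: power3_eq_cube power2_eq_square)
    then show ?thesis using assms(2,3) F2 by (simp add: fps_mult_nth numeral_3_eq_3 numeral_2_eq_2 del: power_Suc)
  qed
  have c1: "fps_nth (fps_compose G F) 1 = 1" using assms(1) by simp
  then show g1: "fps_nth G 1 = 1" using assms(2-4) by (simp add: fps_compose_nth)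
  have "fps_nth (fps_compose G F) 2 = 0" using assms(1) by simp
  then have "fps_nth G 1 * fps_nth F 2 + fps_nth G 2 * fps_nth (F^2) 2 = 0"
    using assms(2-4) by (simp add: fps_compose_nth numeral_2_eq_2 del: power_Suc)
  then show g2: "fps_nth G 2 = - fps_nth F 2" using g1 F2(3) by (simp add: eq_neg_iff_add_eq_0 add.commute)
  have "fps_nth (fps_compose G F) 3 = 0" using assms(1) by simp
  then have "fps_nth G 1 * fps_nth F 3 + fps_nth G 2 * fps_nth (F^2) 3 + fps_nth G 3 * fps_nth (F^3) 3 = 0"
    using assms(2-4) by (simp add: fps_compose_nth numeral_3_eq_3 numeral_2_eq_2 add.assoc del: power_Suc)
  then have "fps_nth F 3 + fps_nth G 2 * (2 * fps_nth F 2) + fps_nth G 3 = 0"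
    using g1 F2(4) F3 by simp
  then show "fps_nth G 3 = 2 * (fps_nth F 2)^2 - fps_nth F 3"
    using g2 by algebra
qed

theorem corollary8:
  fixes lam \<beta> :: real and f :: "complex \<Rightarrow> complex"
  assumes "lam \<ge> 0" and "0 \<le> \<beta>" and "\<beta> < 1"
    and "f \<in> Theta 1 lam 0 0 \<beta>"
  shows "cmod (coeff0 f 2) \<le> min (2 * (1 - \<beta>) / (1 + lam)) (sqrt (2 * (1 - \<beta>) / (1 + 2 * lam)))
     \<and> cmod (coeff0 f 3) \<le> 2 * (1 - \<beta>) / (1 + 2 * lam)"
proof -
  from assms(4) obtain g where nf: "normalized_univalent f" and ie: "inverse_extension f g"
    and ref: "\<forall>z\<in>ball 0 1. Re (J_fun 1 lam 0 0 f z) > \<beta>"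
    and reg: "\<forall>w\<in>ball 0 1. Re (J_fun 1 lam 0 0 g w) > \<beta>"
    unfolding Theta_def by blast
  have holf: "f holomorphic_on ball 0 1" and f0: "f 0 = 0" and df0: "deriv f 0 = 1"
    using nf unfolding normalized_univalent_def by (auto intro: analytic_imp_holomorphic)
  have holg: "g holomorphic_on ball 0 1" and gf: "\<And>z. z \<in> ball 0 1 \<Longrightarrow> f z \<in> ball 0 1 \<Longrightarrow> g (f z) = z"
    using ie unfolding inverse_extension_def by (auto intro: analytic_imp_holomorphic)
  have g0: "g 0 = 0" using gf[of 0] f0 by simp
  define F where "F = fps_expansion f 0"
  define G where "G = fps_expansion g 0"
  have F0: "fps_nth F 0 = 0" unfolding F_def using fps0[OF holf] f0 by simp
  have F1: "fps_nth F 1 = 1" unfolding F_def using fps1[OF holf] df0 by simp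
  have G0: "fps_nth G 0 = 0" unfolding G_def using fps0[OF holg] g0 by simp
  have "f field_differentiable at 0"
    using holf by (intro holomorphic_on_imp_differentiable_at[of _ "ball 0 1"]) auto
  then have "isCont f 0" by (rule field_differentiable_imp_continuous_at)
  then have "(f \<longlongrightarrow> f 0) (nhds 0)" using tendsto_at_iff_tendsto_nhds isCont_def by blast
  then have evf: "eventually (\<lambda>z. f z \<in> ball 0 1) (nhds 0)"
    using f0 by (intro topological_tendstoD) auto
  have "(g \<circ> f) has_fps_expansion fps_compose G F"
    unfolding G_def F_def using F0[unfolded F_def]
    by (intro has_fps_expansion_compose hol_fps holg holf)
  moreover have "(g \<circ> f) has_fps_expansion fps_compose G F \<longleftrightarrow> (\<lambda>z. z) has_fps_expansion fps_compose G F"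
    by (rule has_fps_expansion_cong[OF eventually_mono[OF eventually_conj[OF evf ev_ball]]])
      (auto simp: gf)
  ultimately have "fps_compose G F = fps_X"
    using fps_exp_unique has_fps_expansion_fps_X by blast
  note ic = inv_coeffs[OF this F0 F1 G0]
  have dg0: "deriv g 0 = 1" using fps1[OF holg] ic(1) unfolding G_def by simp
  obtain p1 p2 where e1: "of_real (1 + lam) * fps_nth F 2 = of_real (1 - \<beta>) * p1"
     and e2: "of_real (1 + 2 * lam) * fps_nth F 3 = of_real (1 - \<beta>) * p2"
     and c1: "cmod p1 \<le> 2" and c2: "cmod p2 \<le> 2"
    using side[OF holf f0 df0 assms(3) ref] unfolding F_def by blast
  obtain q2 where e3: "of_real (1 + 2 * lam) * fps_nth G 3 = of_real (1 - \<beta>) * q2"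
     and c3: "cmod q2 \<le> 2"
    using side[OF holg g0 dg0 assms(3) reg] unfolding G_def by blast
  define a2 where "a2 = fps_nth F 2"
  define a3 where "a3 = fps_nth F 3"
  have A2: "coeff0 f 2 = a2" and A3: "coeff0 f 3 = a3" by (simp_all add: coeff0_fps a2_def a3_def F_def)
  have l1: "1 + lam > 0" "1 + 2 * lam > 0" "1 - \<beta> > 0" using assms by auto
  have n1: "(1 + lam) * cmod a2 = (1 - \<beta>) * cmod p1"
    using arg_cong[OF e1, of cmod] l1 unfolding a2_def norm_mult norm_of_real by simp
  have n2: "(1 + 2 * lam) * cmod a3 = (1 - \<beta>) * cmod p2"
    using arg_cong[OF e2, of cmod] l1 unfolding a3_def norm_mult norm_of_real by simp
  have "of_real (1 + 2 * lam) * (2 * a2^2) = of_real (1 - \<beta>) * (p2 + q2)"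
    using e2 e3 ic(3) unfolding a2_def a3_def by (simp add: algebra_simps)
  from arg_cong[OF this, of cmod]
  have "(1 + 2 * lam) * (2 * (cmod a2)^2) = (1 - \<beta>) * cmod (p2 + q2)"
    using l1 unfolding norm_mult norm_of_real norm_power by simp
  moreover have "cmod (p2 + q2) \<le> 4" using c2 c3 norm_triangle_ineq[of p2 q2] by simp
  ultimately have "(1 + 2 * lam) * (2 * (cmod a2)^2) \<le> (1 - \<beta>) * 4"
    using l1 by (metis mult_left_mono less_imp_le)
  then have sq: "(cmod a2)^2 \<le> 2 * (1 - \<beta>) / (1 + 2 * lam)"
    using l1 by (simp add: field_simps)
  have b1: "cmod a2 \<le> 2 * (1 - \<beta>) / (1 + lam)"
  proof -
    have "(1 + lam) * cmod a2 \<le> (1 - \<beta>) * 2" using n1 c1 l1 by (metis mult_left_mono less_imp_le)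
    then show ?thesis using l1 by (simp add: field_simps)
  qed
  have b3: "cmod a3 \<le> 2 * (1 - \<beta>) / (1 + 2 * lam)"
  proof -
    have "(1 + 2 * lam) * cmod a3 \<le> (1 - \<beta>) * 2" using n2 c2 l1 by (metis mult_left_mono less_imp_le)
    then show ?thesis using l1 by (simp add: field_simps)
  qed
  show ?thesis unfolding A2 A3 using b1 b3 real_le_rsqrt[OF sq] by simp
qed


end
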